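(* Let $\mathcal X$ and $\mathcal U$ be finite nonempty sets, $f:\mathcal X\times\mathcal U\to\mathcal X$, and $\ell_1,\ell_2:\mathcal X\to\mathbb R$. Define, for $x\in\mathcal X$, $V_{\mathrm{R}i}^*(x)=\max_{\pi\in\Pi}\max_{\tau\in\mathbb N}\ell_i(\xi_x^\pi(\tau))$ for $i=1,2$, $$\hat\ell(x)=\max\big\{\min\{\ell_1(x),V_{\mathrm{R}2}^*(x)\},\ \min\{V_{\mathrm{R}1}^*(x),\ell_2(x)\}\big\},\qquad \tilde V_{\mathrm R}^*(x)=\max_{\pi\in\Pi}\max_{\tau\in\mathbb N}\hat\ell(\xi_x^\pi(\tau)).$$ Then for every $x\in\mathcal X$, $$\max_{\bar\pi\in\overline\Pi}\min\Big\{\max_{\tau\in\mathbb N}\ell_1(\bar\xi_x^{\bar\pi}(\tau)),\max_{\tau\in\mathbb N}\ell_2(\bar\xi_x^{\bar\pi}(\tau))\Big\}=\max_{\mathbf u\in\mathbb U}\min\Big\{\max_{\tau\in\mathbb N}\ell_1(\xi_x^{\mathbf u}(\tau)),\max_{\tau\in\mathbb N}\ell_2(\xi_x^{\mathbf u}(\tau))\Big\}=\tilde V_{\mathrm R}^*(x).$$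
   Context: $\mathbb N=\{0,1,2,\dots\}$. $\Pi$ is the set of maps $\pi:\mathcal X\to\mathcal U$ and $\mathbb U$ the set of action sequences $\mathbf u:\mathbb N\to\mathcal U$. For $x\in\mathcal X$ and $\pi\in\Pi$, $\xi_x^\pi(0)=x$, $\xi_x^\pi(t+1)=f(\xi_x^\pi(t),\pi(\xi_x^\pi(t)))$; for $\mathbf u\in\mathbb U$, $\xi_x^{\mathbf u}(0)=x$, $\xi_x^{\mathbf u}(t+1)=f(\xi_x^{\mathbf u}(t),\mathbf u(t))$. Let $\mathcal Y=\{\ell_1(x):x\in\mathcal X\}$, $\mathcal Z=\{\ell_2(x):x\in\mathcal X\}$, and $\overline\Pi$ the set of augmented policies $\bar\pi:\mathcal X\times\mathcal Y\times\mathcal Z\to\mathcal U$. The augmented trajectory is defined by $\bar\xi_x^{\bar\pi}(0)=x$, $\bar y_x^{\bar\pi}(0)=\ell_1(x)$, $\bar z_x^{\bar\pi}(0)=\ell_2(x)$, $\bar\xi_x^{\bar\pi}(t+1)=f\big(\bar\xi_x^{\bar\pi}(t),\bar\pi(\bar\xi_x^{\bar\pi}(t),\bar y_x^{\bar\pi}(t),\bar z_x^{\bar\pi}(t))\big)$, $\bar y_x^{\bar\pi}(t+1)=\max\{\ell_1(\bar\xi_x^{\bar\pi}(t+1)),\bar y_x^{\bar\pi}(t)\}$, $\bar z_x^{\bar\pi}(t+1)=\max\{\ell_2(\bar\xi_x^{\bar\pi}(t+1)),\bar z_x^{\bar\pi}(t)\}$. *)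

theory Defs
  imports Complex_Main
begin

fun traj_pol :: "('x \<Rightarrow> 'u \<Rightarrow> 'x) \<Rightarrow> ('x \<Rightarrow> 'u) \<Rightarrow> 'x \<Rightarrow> nat \<Rightarrow> 'x" where
  "traj_pol f pol x 0 = x"
| "traj_pol f pol x (Suc t) = f (traj_pol f pol x t) (pol (traj_pol f pol x t))"

fun traj_seq :: "('x \<Rightarrow> 'u \<Rightarrow> 'x) \<Rightarrow> (nat \<Rightarrow> 'u) \<Rightarrow> 'x \<Rightarrow> nat \<Rightarrow> 'x" where
  "traj_seq f u x 0 = x"
| "traj_seq f u x (Suc t) = f (traj_seq f u x t) (u t)"

text \<open>Augmented trajectory (state, running max of l1, running max of l2)
  under an augmented policy p : X x Y x Z -> U.\<close>
fun aug_traj :: "('x \<Rightarrow> 'u \<Rightarrow> 'x) \<Rightarrow> ('x \<Rightarrow> real) \<Rightarrow> ('x \<Rightarrow> real)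
    \<Rightarrow> ('x \<Rightarrow> real \<Rightarrow> real \<Rightarrow> 'u) \<Rightarrow> 'x \<Rightarrow> nat \<Rightarrow> 'x \<times> real \<times> real" where
  "aug_traj f l1 l2 p x 0 = (x, l1 x, l2 x)"
| "aug_traj f l1 l2 p x (Suc t) =
     (case aug_traj f l1 l2 p x t of (s, y, z) \<Rightarrow>
        (let s' = f s (p s y z) in (s', max (l1 s') y, max (l2 s') z)))"

definition VR :: "('x \<Rightarrow> 'u \<Rightarrow> 'x) \<Rightarrow> ('x \<Rightarrow> real) \<Rightarrow> 'x \<Rightarrow> real" where
  "VR f l x = Max {Max (range (\<lambda>t. l (traj_pol f pol x t))) | pol. True}"

definition lhat :: "('x \<Rightarrow> 'u \<Rightarrow> 'x) \<Rightarrow> ('x \<Rightarrow> real) \<Rightarrow> ('x \<Rightarrow> real) \<Rightarrow> 'x \<Rightarrow> real" where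
  "lhat f l1 l2 x = max (min (l1 x) (VR f l2 x)) (min (VR f l1 x) (l2 x))"

definition VRtilde :: "('x \<Rightarrow> 'u \<Rightarrow> 'x) \<Rightarrow> ('x \<Rightarrow> real) \<Rightarrow> ('x \<Rightarrow> real) \<Rightarrow> 'x \<Rightarrow> real" where
  "VRtilde f l1 l2 x = VR f (lhat f l1 l2) x"

end

theory Submission
  imports Defs
begin

lemma fin_range: "finite (range (\<lambda>t. l (h t :: 'x::finite)))"
  by (rule finite_subset[of _ "range l"]) auto

lemma Max_range_ge: "l (h t :: 'x::finite) \<le> (Max (range (\<lambda>t. l (h t))) :: 'a::linorder)"
  by (rule Max_ge[OF fin_range]) auto

lemma Max_range_att: "\<exists>t. (Max (range (\<lambda>t. l (h t :: 'x::finite))) :: 'a::linorder) = l (h t)"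
proof -
  have "Max (range (\<lambda>t. l (h t))) \<in> range (\<lambda>t. l (h t))"
    by (rule Max_in[OF fin_range]) auto
  then show ?thesis by auto
qed

lemma traj_seq_shift: "traj_seq f u x (a + n) = traj_seq f (\<lambda>t. u (a + t)) (traj_seq f u x a) n"
  by (induction n) auto

lemma traj_seq_Suc_shift: "traj_seq f u x (Suc n) = traj_seq f (\<lambda>t. u (Suc t)) (f x (u 0)) n"
  by (induction n) auto

lemma traj_pol_seq: "traj_pol f pol x t = traj_seq f (\<lambda>t. pol (traj_pol f pol x t)) x t"
  by (induction t) auto

lemma traj_pol_shift: "traj_pol f pol x (a + n) = traj_pol f pol (traj_pol f pol x a) n"
  by (induction n) auto

lemma traj_pol_Suc_shift: "traj_pol f pol x (Suc n) = traj_pol f pol (f x (pol x)) n"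
  using traj_pol_shift[of f pol x 1 n] by simp

lemma traj_seq_prefix: "(\<forall>t<n. u t = v t) \<Longrightarrow> traj_seq f u x n = traj_seq f v x n"
  by (induction n) auto

definition Reach :: "('x \<Rightarrow> 'u \<Rightarrow> 'x) \<Rightarrow> 'x \<Rightarrow> 'x set" where
  "Reach f x = {y. \<exists>u n. traj_seq f u x n = y}"

lemma Reach_self: "x \<in> Reach f x"
  unfolding Reach_def by (rule CollectI, rule exI[of _ undefined], rule exI[of _ 0]) simp

lemma Reach_trans:
  assumes "y \<in> Reach f x" "z \<in> Reach f y" shows "z \<in> Reach f x"
proof -
  obtain u n where u: "traj_seq f u x n = y" using assms(1) unfolding Reach_def by auto
  obtain v m where v: "traj_seq f v y m = z" using assms(2) unfolding Reach_def by auto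
  define w where "w t = (if t < n then u t else v (t - n))" for t
  have "traj_seq f w x (n + m) = traj_seq f (\<lambda>t. w (n + t)) (traj_seq f w x n) m"
    by (rule traj_seq_shift)
  also have "traj_seq f w x n = y" using u traj_seq_prefix[of n w u f x] by (simp add: w_def)
  also have "(\<lambda>t. w (n + t)) = v" by (auto simp: w_def)
  finally show ?thesis using v unfolding Reach_def by auto
qed

lemma Reach_seq: "traj_seq f u x n \<in> Reach f x"
  unfolding Reach_def by auto

lemma Reach_pol: "traj_pol f pol x n \<in> Reach f x"
  by (subst traj_pol_seq) (rule Reach_seq)

fun lev :: "('x \<Rightarrow> 'u \<Rightarrow> 'x) \<Rightarrow> 'x set \<Rightarrow> nat \<Rightarrow> 'x set" where
  "lev f T 0 = T"
| "lev f T (Suc n) = lev f T n \<union> {s. \<exists>a. f s a \<in> lev f T n}"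

lemma seq_lev: "traj_seq f u s n \<in> T \<Longrightarrow> s \<in> lev f T n"
proof (induction n arbitrary: s u)
  case 0 then show ?case by simp
next
  case (Suc n)
  have "traj_seq f (\<lambda>t. u (Suc t)) (f s (u 0)) n \<in> T"
    using Suc.prems traj_seq_Suc_shift[of f u s n] by simp
  then have "f s (u 0) \<in> lev f T n" by (rule Suc.IH)
  then show ?case by auto
qed

lemma attractor:
  "\<exists>pol. \<forall>s. (\<exists>u n. traj_seq f u s n \<in> T) \<longrightarrow> (\<exists>t. traj_pol f pol s t \<in> T)"
proof -
  define d where "d s = (LEAST n. s \<in> lev f T n)" for s
  define pol where "pol s = (SOME a. f s a \<in> lev f T (d s - 1))" for s
  have main: "s \<in> lev f T n \<Longrightarrow> \<exists>t. traj_pol f pol s t \<in> T" for n s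
  proof (induction n arbitrary: s rule: less_induct)
    case (less n)
    have sk: "s \<in> lev f T (d s)" unfolding d_def by (rule LeastI[of "\<lambda>n. s \<in> lev f T n", OF less.prems])
    have kn: "d s \<le> n" unfolding d_def by (rule Least_le[of "\<lambda>n. s \<in> lev f T n", OF less.prems])
    show ?case
    proof (cases "d s")
      case 0
      then have "traj_pol f pol s 0 \<in> T" using sk by simp
      then show ?thesis by blast
    next
      case (Suc j)
      have "j < d s" using Suc by simp
      then have "s \<notin> lev f T j" unfolding d_def by (rule not_less_Least)
      then have "\<exists>a. f s a \<in> lev f T j" using sk Suc by auto
      then have "f s (SOME a. f s a \<in> lev f T j) \<in> lev f T j" by (rule someI_ex)
      then have "f s (pol s) \<in> lev f T j" by (simp add: pol_def Suc)
      moreover have "j < n" using kn Suc by simp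
      ultimately obtain t where "traj_pol f pol (f s (pol s)) t \<in> T"
        using less.IH by blast
      then have "traj_pol f pol s (Suc t) \<in> T" by (simp only: traj_pol_Suc_shift)
      then show ?thesis by blast
    qed
  qed
  show ?thesis
  proof (intro exI[of _ pol] allI impI)
    fix s assume "\<exists>u n. traj_seq f u s n \<in> T"
    then obtain u n where "traj_seq f u s n \<in> T" by blast
    then show "\<exists>t. traj_pol f pol s t \<in> T" by (rule main[OF seq_lev])
  qed
qed

lemma reach_pol:
  assumes "y \<in> Reach f x" shows "\<exists>pol t. traj_pol f pol x t = y"
proof -
  obtain pol where P: "\<forall>s. (\<exists>u n. traj_seq f u s n \<in> {y}) \<longrightarrow> (\<exists>t. traj_pol f pol s t \<in> {y})"
    using attractor[where f=f and T="{y}"] by (elim exE) (rule that)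
  obtain u n where "traj_seq f u x n = y" using assms unfolding Reach_def by blast
  then have "\<exists>u n. traj_seq f u x n \<in> {y}" by blast
  moreover have "(\<exists>u n. traj_seq f u x n \<in> {y}) \<longrightarrow> (\<exists>t. traj_pol f pol x t \<in> {y})"
    using P by (rule spec)
  ultimately have "\<exists>t. traj_pol f pol x t \<in> {y}" by (rule mp[rotated])
  then show ?thesis by blast
qed

lemma VR_Reach:
  fixes f :: "'x::finite \<Rightarrow> 'u \<Rightarrow> 'x"
  shows "VR f l x = Max (l ` Reach f x)"
proof -
  let ?M = "Max (l ` Reach f x)"
  have fin: "finite (l ` Reach f x)" by simp
  have ne: "l ` Reach f x \<noteq> {}" using Reach_self[of x f] by blast
  have sub: "Max (range (\<lambda>t. l (traj_pol f pol x t))) \<in> l ` Reach f x" for pol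
  proof -
    obtain t where eq: "Max (range (\<lambda>t. l (traj_pol f pol x t))) = l (traj_pol f pol x t)"
      using Max_range_att[of l "traj_pol f pol x"] by blast
    show ?thesis unfolding eq by (rule imageI[OF Reach_pol])
  qed
  have le: "Max (range (\<lambda>t. l (traj_pol f pol x t))) \<le> ?M" for pol
    by (rule Max_ge[OF fin sub])
  have "?M \<in> l ` Reach f x" by (rule Max_in[OF fin ne])
  then obtain y where y': "?M = l y" "y \<in> Reach f x" by (rule imageE)
  have y: "y \<in> Reach f x" "l y = ?M" using y' by simp_all
  obtain pol t where pt: "traj_pol f pol x t = y" using reach_pol[OF y(1)] by blast
  have "l (traj_pol f pol x t) \<le> Max (range (\<lambda>t. l (traj_pol f pol x t)))"
    by (rule Max_range_ge[of l "traj_pol f pol x" t])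
  then have "?M \<le> Max (range (\<lambda>t. l (traj_pol f pol x t)))" using pt y(2) by simp
  then have eq: "Max (range (\<lambda>t. l (traj_pol f pol x t))) = ?M" using le[of pol] by (rule antisym[rotated])
  show ?thesis unfolding VR_def
  proof (rule Max_eqI)
    show "finite {Max (range (\<lambda>t. l (traj_pol f pol x t))) |pol. True}"
      by (rule finite_subset[OF _ fin]) (use sub in blast)
    show "z \<le> ?M" if "z \<in> {Max (range (\<lambda>t. l (traj_pol f pol x t))) |pol. True}" for z
      using that le by blast
    show "?M \<in> {Max (range (\<lambda>t. l (traj_pol f pol x t))) |pol. True}"
      by (rule CollectI, rule exI[of _ pol]) (simp add: eq)
  qed
qed

lemma aug_fst_Suc: "fst (aug_traj f l1 l2 p x (Suc t)) =
   f (fst (aug_traj f l1 l2 p x t)) (p (fst (aug_traj f l1 l2 p x t)) (fst (snd (aug_traj f l1 l2 p x t))) (snd (snd (aug_traj f l1 l2 p x t))))"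
  by (cases "aug_traj f l1 l2 p x t") (simp add: Let_def)

lemma aug_y_Suc: "fst (snd (aug_traj f l1 l2 p x (Suc t))) =
   max (l1 (fst (aug_traj f l1 l2 p x (Suc t)))) (fst (snd (aug_traj f l1 l2 p x t)))"
  by (cases "aug_traj f l1 l2 p x t") (simp add: Let_def)

lemma aug_z_Suc: "snd (snd (aug_traj f l1 l2 p x (Suc t))) =
   max (l2 (fst (aug_traj f l1 l2 p x (Suc t)))) (snd (snd (aug_traj f l1 l2 p x t)))"
  by (cases "aug_traj f l1 l2 p x t") (simp add: Let_def)

lemma aug_seq: "fst (aug_traj f l1 l2 p x t) =
  traj_seq f (\<lambda>t. p (fst (aug_traj f l1 l2 p x t)) (fst (snd (aug_traj f l1 l2 p x t))) (snd (snd (aug_traj f l1 l2 p x t)))) x t"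
proof (induction t)
  case 0 then show ?case by simp
next
  case (Suc t)
  show ?case by (simp only: aug_fst_Suc traj_seq.simps Suc.IH[symmetric])
qed

lemma aug_swap: "fst (aug_traj f l1 l2 (\<lambda>s y z. p s z y) x t) = fst (aug_traj f l2 l1 p x t)
   \<and> fst (snd (aug_traj f l1 l2 (\<lambda>s y z. p s z y) x t)) = snd (snd (aug_traj f l2 l1 p x t))
   \<and> snd (snd (aug_traj f l1 l2 (\<lambda>s y z. p s z y) x t)) = fst (snd (aug_traj f l2 l1 p x t))"
proof (induction t)
  case 0 then show ?case by simp
next
  case (Suc t)
  then show ?case by (simp only: aug_fst_Suc aug_y_Suc aug_z_Suc)
qed

lemma key:
  fixes f :: "'x::finite \<Rightarrow> 'u \<Rightarrow> 'x" and la lb :: "'x \<Rightarrow> real"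
  assumes y': "y' \<in> Reach f x" "la y' \<ge> V" and z': "z' \<in> Reach f y'" "lb z' \<ge> V"
  shows "\<exists>p. (\<exists>t. la (fst (aug_traj f la lb p x t)) \<ge> V) \<and> (\<exists>t. lb (fst (aug_traj f la lb p x t)) \<ge> V)"
proof -
  obtain pol1 t1 where pt1: "traj_pol f pol1 x t1 = y'" using reach_pol[OF y'(1)] by blast
  obtain pol2 where pol2: "\<forall>s. (\<exists>u n. traj_seq f u s n \<in> {s. lb s \<ge> V}) \<longrightarrow> (\<exists>t. traj_pol f pol2 s t \<in> {s. lb s \<ge> V})"
    using attractor[where f=f and T="{s. lb s \<ge> V}"] by (elim exE) (rule that)
  define p :: "'x \<Rightarrow> real \<Rightarrow> real \<Rightarrow> 'u" where "p s y z = (if y < V then pol1 s else pol2 s)" for s y z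
  define S where "S t = fst (aug_traj f la lb p x t)" for t
  define Y where "Y t = fst (snd (aug_traj f la lb p x t))" for t
  have SSuc: "S (Suc t) = f (S t) (if Y t < V then pol1 (S t) else pol2 (S t))" for t
    unfolding S_def Y_def by (simp only: aug_fst_Suc) (simp add: p_def)
  have YSuc: "Y (Suc t) = max (la (S (Suc t))) (Y t)" for t
    unfolding S_def Y_def by (rule aug_y_Suc)
  have inv: "(\<forall>i\<le>t. la (S i) \<le> Y t) \<and> (\<exists>i\<le>t. Y t = la (S i))" for t
  proof (induction t)
    case 0 then show ?case by (simp add: S_def Y_def)
  next
    case (Suc t)
    then obtain i where i: "i \<le> t" "Y t = la (S i)" by blast
    have a: "\<forall>i\<le>Suc t. la (S i) \<le> Y (Suc t)"
      using Suc YSuc by (auto simp: le_Suc_eq max_def)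
    have b: "\<exists>i\<le>Suc t. Y (Suc t) = la (S i)"
    proof (cases "la (S (Suc t)) \<le> Y t")
      case True then show ?thesis using i YSuc[of t] by (intro exI[of _ i]) auto
    next
      case False then show ?thesis using YSuc[of t] by (intro exI[of _ "Suc t"]) auto
    qed
    show ?case using a b by blast
  qed
  have Ymono: "Y t \<le> Y (t + j)" for t j
    by (induction j) (auto simp: YSuc intro: order.trans)
  have phase1: "(\<forall>i<t. Y i < V) \<Longrightarrow> S t = traj_pol f pol1 x t" for t
  proof (induction t)
    case 0 then show ?case by (simp add: S_def)
  next
    case (Suc t)
    then have "Y t < V" "S t = traj_pol f pol1 x t" by auto
    then show ?case by (simp only: SSuc if_True traj_pol.simps)
  qed
  have ex: "\<exists>t. V \<le> Y t"
  proof (rule ccontr)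
    assume nt: "\<not> (\<exists>t. V \<le> Y t)"
    then have "\<forall>i<t1. Y i < V" by (auto simp: not_le)
    then have "S t1 = y'" using phase1 pt1 by simp
    then have "V \<le> Y t1" using inv[of t1] y'(2) by auto
    then show False using nt by blast
  qed
  define t0 where "t0 = (LEAST t. V \<le> Y t)"
  have Yt0: "V \<le> Y t0" unfolding t0_def using ex by (metis LeastI)
  have before: "\<forall>i<t0. Y i < V" unfolding t0_def using not_less_Least not_le by blast
  have St0: "S t0 = traj_pol f pol1 x t0" using phase1 before by blast
  have t0le: "t0 \<le> t1"
  proof (rule ccontr)
    assume "\<not> t0 \<le> t1"
    then have "\<forall>i<t1. Y i < V" using before by auto
    then have "S t1 = y'" using phase1 pt1 by simp
    then have "V \<le> Y t1" using inv[of t1] y'(2) by auto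
    moreover have "t1 < t0" using \<open>\<not> t0 \<le> t1\<close> by simp
    ultimately have "Y t1 < V" using before by blast
    then show False using \<open>V \<le> Y t1\<close> by simp
  qed
  have "y' = traj_pol f pol1 (S t0) (t1 - t0)"
    using pt1 St0 traj_pol_shift[of f pol1 x t0 "t1 - t0"] t0le by simp
  then have "y' \<in> Reach f (S t0)" using Reach_pol[of f pol1 "S t0" "t1 - t0"] by simp
  then have "z' \<in> Reach f (S t0)" by (rule Reach_trans[OF _ z'(1)])
  then obtain u n where "traj_seq f u (S t0) n = z'" unfolding Reach_def by blast
  then have "traj_seq f u (S t0) n \<in> {s. lb s \<ge> V}" using z'(2) by simp
  then have "\<exists>u n. traj_seq f u (S t0) n \<in> {s. lb s \<ge> V}" by blast
  moreover have "(\<exists>u n. traj_seq f u (S t0) n \<in> {s. lb s \<ge> V}) \<longrightarrow> (\<exists>t. traj_pol f pol2 (S t0) t \<in> {s. lb s \<ge> V})"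
    using pol2 by (rule spec)
  ultimately have "\<exists>t. traj_pol f pol2 (S t0) t \<in> {s. lb s \<ge> V}" by (rule mp[rotated])
  then obtain k where k: "lb (traj_pol f pol2 (S t0) k) \<ge> V" by blast
  have phase2: "S (t0 + j) = traj_pol f pol2 (S t0) j" for j
  proof (induction j)
    case 0 then show ?case by simp
  next
    case (Suc j)
    have "V \<le> Y (t0 + j)" using Yt0 Ymono[of t0 j] by simp
    then show ?case using Suc SSuc[of "t0 + j"] by simp
  qed
  obtain i where "i \<le> t0" "Y t0 = la (S i)" using inv[of t0] by blast
  then have "la (S i) \<ge> V" using Yt0 by simp
  moreover have "lb (S (t0 + k)) \<ge> V" using phase2 k by simp
  ultimately show ?thesis unfolding S_def by blast
qed

theorem theorem2:
  fixes f :: "'x::finite \<Rightarrow> 'u::finite \<Rightarrow> 'x"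
    and l1 l2 :: "'x \<Rightarrow> real"
    and x :: 'x
  shows "Max {min (Max (range (\<lambda>t. l1 (fst (aug_traj f l1 l2 p x t)))))
                  (Max (range (\<lambda>t. l2 (fst (aug_traj f l1 l2 p x t))))) | p. True}
         = Max {min (Max (range (\<lambda>t. l1 (traj_seq f u x t))))
                    (Max (range (\<lambda>t. l2 (traj_seq f u x t)))) | u. True}
       \<and> Max {min (Max (range (\<lambda>t. l1 (traj_seq f u x t))))
                    (Max (range (\<lambda>t. l2 (traj_seq f u x t)))) | u. True}
         = VRtilde f l1 l2 x"
proof -
  define g where "g u = min (Max (range (\<lambda>t. l1 (traj_seq f u x t))))
                    (Max (range (\<lambda>t. l2 (traj_seq f u x t))))" for u
  define Su where "Su = {g u | u. True}"
  define Sp where "Sp = {min (Max (range (\<lambda>t. l1 (fst (aug_traj f l1 l2 p x t)))))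
                  (Max (range (\<lambda>t. l2 (fst (aug_traj f l1 l2 p x t))))) | p. True}"
  define W where "W = VRtilde f l1 l2 x"
  have W: "W = Max (lhat f l1 l2 ` Reach f x)"
    unfolding W_def VRtilde_def by (rule VR_Reach)
  have finR: "finite (lhat f l1 l2 ` Reach f x)" by simp
  have lhat_le: "lhat f l1 l2 y \<le> W" if "y \<in> Reach f x" for y
    unfolding W using that finR by simp
  have VR_ge: "l z \<le> VR f l y" if "z \<in> Reach f y" for l :: "'x \<Rightarrow> real" and y z
    unfolding VR_Reach using that by simp
  have gin: "g u \<in> range l1 \<union> range l2" for u
  proof -
    obtain a where "Max (range (\<lambda>t. l1 (traj_seq f u x t))) = l1 (traj_seq f u x a)"
      using Max_range_att by metis
    moreover obtain b where "Max (range (\<lambda>t. l2 (traj_seq f u x t))) = l2 (traj_seq f u x b)"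
      using Max_range_att by metis
    ultimately show ?thesis unfolding g_def by (auto simp: min_def)
  qed
  have finSu: "finite Su"
    by (rule finite_subset[of _ "range l1 \<union> range l2"]) (use gin in \<open>auto simp: Su_def\<close>)
  have a: "g u \<le> W" for u
  proof -
    obtain a where A: "Max (range (\<lambda>t. l1 (traj_seq f u x t))) = l1 (traj_seq f u x a)"
      using Max_range_att by metis
    obtain b where B: "Max (range (\<lambda>t. l2 (traj_seq f u x t))) = l2 (traj_seq f u x b)"
      using Max_range_att by metis
    show ?thesis
    proof (cases "a \<le> b")
      case True
      let ?y = "traj_seq f u x a"
      have "traj_seq f u x b = traj_seq f (\<lambda>t. u (a + t)) ?y (b - a)"
        using traj_seq_shift[of f u x a "b - a"] True by simp
      then have "traj_seq f u x b \<in> Reach f ?y" by (metis Reach_seq)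
      then have "l2 (traj_seq f u x b) \<le> VR f l2 ?y" by (rule VR_ge)
      then have "g u \<le> lhat f l1 l2 ?y" unfolding g_def A B lhat_def by auto
      then show ?thesis using lhat_le[OF Reach_seq] by (rule order.trans)
    next
      case False
      let ?y = "traj_seq f u x b"
      have "traj_seq f u x a = traj_seq f (\<lambda>t. u (b + t)) ?y (a - b)"
        using traj_seq_shift[of f u x b "a - b"] False by simp
      then have "traj_seq f u x a \<in> Reach f ?y" by (metis Reach_seq)
      then have "l1 (traj_seq f u x a) \<le> VR f l1 ?y" by (rule VR_ge)
      then have "g u \<le> lhat f l1 l2 ?y" unfolding g_def A B lhat_def by auto
      then show ?thesis using lhat_le[OF Reach_seq] by (rule order.trans)
    qed
  qed
  have b: "Sp \<subseteq> Su"
  proof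
    fix v assume "v \<in> Sp"
    then obtain p where "v = min (Max (range (\<lambda>t. l1 (fst (aug_traj f l1 l2 p x t)))))
                  (Max (range (\<lambda>t. l2 (fst (aug_traj f l1 l2 p x t)))))" unfolding Sp_def by blast
    then have "v = g (\<lambda>t. p (fst (aug_traj f l1 l2 p x t)) (fst (snd (aug_traj f l1 l2 p x t))) (snd (snd (aug_traj f l1 l2 p x t))))"
      unfolding g_def by (subst (asm) (1 2) aug_seq) simp
    then show "v \<in> Su" unfolding Su_def by blast
  qed
  have pval: "W \<le> min (Max (range (\<lambda>t. l1 (fst (aug_traj f l1 l2 p x t)))))
                  (Max (range (\<lambda>t. l2 (fst (aug_traj f l1 l2 p x t)))))"
    if h: "\<exists>t. l1 (fst (aug_traj f l1 l2 p x t)) \<ge> W" "\<exists>t. l2 (fst (aug_traj f l1 l2 p x t)) \<ge> W" for p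
  proof -
    obtain t where t: "l1 (fst (aug_traj f l1 l2 p x t)) \<ge> W" using h(1) by blast
    obtain t' where t': "l2 (fst (aug_traj f l1 l2 p x t')) \<ge> W" using h(2) by blast
    from t t' 
    show ?thesis
      using Max_range_ge[of l1 "\<lambda>t. fst (aug_traj f l1 l2 p x t)" t]
        Max_range_ge[of l2 "\<lambda>t. fst (aug_traj f l1 l2 p x t)" t'] by simp
  qed
  have c: "\<exists>v\<in>Sp. W \<le> v"
  proof -
    have ne: "lhat f l1 l2 ` Reach f x \<noteq> {}" using Reach_self[of x f] by blast
    have "Max (lhat f l1 l2 ` Reach f x) \<in> lhat f l1 l2 ` Reach f x" by (rule Max_in[OF finR ne])
    then obtain y' where y'0: "Max (lhat f l1 l2 ` Reach f x) = lhat f l1 l2 y'" "y' \<in> Reach f x" by (rule imageE)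
    have y': "y' \<in> Reach f x" "lhat f l1 l2 y' = W" using y'0 W by simp_all
    have "VR f l2 y' \<in> l2 ` Reach f y'" unfolding VR_Reach
      by (rule Max_in) (use Reach_self[of y' f] in auto)
    then obtain z2 where z20: "VR f l2 y' = l2 z2" "z2 \<in> Reach f y'" by (rule imageE)
    have z2: "z2 \<in> Reach f y'" "l2 z2 = VR f l2 y'" using z20 by simp_all
    have "VR f l1 y' \<in> l1 ` Reach f y'" unfolding VR_Reach
      by (rule Max_in) (use Reach_self[of y' f] in auto)
    then obtain z1 where z10: "VR f l1 y' = l1 z1" "z1 \<in> Reach f y'" by (rule imageE)
    have z1: "z1 \<in> Reach f y'" "l1 z1 = VR f l1 y'" using z10 by simp_all
    show ?thesis
    proof (cases "W = min (l1 y') (VR f l2 y')")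
      case True
      have h1: "l1 y' \<ge> W" and h2: "l2 z2 \<ge> W" using True z2(2) by auto
      obtain p where "\<exists>t. l1 (fst (aug_traj f l1 l2 p x t)) \<ge> W" "\<exists>t. l2 (fst (aug_traj f l1 l2 p x t)) \<ge> W"
        using key[where la=l1 and lb=l2, OF y'(1) h1 z2(1) h2] by blast
      then show ?thesis using pval unfolding Sp_def by blast
    next
      case False
      then have W2: "W = min (VR f l1 y') (l2 y')" using y'(2) unfolding lhat_def by (auto simp: max_def)
      have h1: "l2 y' \<ge> W" and h2: "l1 z1 \<ge> W" using W2 z1(2) by auto
      obtain p' where "\<exists>t. l2 (fst (aug_traj f l2 l1 p' x t)) \<ge> W" "\<exists>t. l1 (fst (aug_traj f l2 l1 p' x t)) \<ge> W"
        using key[where la=l2 and lb=l1, OF y'(1) h1 z1(1) h2] by blast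
      then have "\<exists>t. l1 (fst (aug_traj f l1 l2 (\<lambda>s y z. p' s z y) x t)) \<ge> W"
                "\<exists>t. l2 (fst (aug_traj f l1 l2 (\<lambda>s y z. p' s z y) x t)) \<ge> W"
        using aug_swap[of f l1 l2 p' x] by auto
      then show ?thesis using pval unfolding Sp_def by blast
    qed
  qed
  have neSp: "Sp \<noteq> {}" using c by blast
  have finSp: "finite Sp" using b finSu finite_subset by blast
  have neSu: "Su \<noteq> {}" unfolding Su_def by blast
  have 1: "Max Su \<le> W" using finSu neSu a unfolding Su_def by (auto simp: Max_le_iff)
  have 2: "W \<le> Max Sp" using c finSp by (meson Max_ge order.trans)
  have 3: "Max Sp \<le> Max Su" using Max_mono[OF b neSp finSu] .
  have "Max Sp = Max Su \<and> Max Su = W" using 1 2 3 by linarith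
  then show ?thesis by (simp only: Sp_def Su_def g_def W_def)
qed

end
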